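(* Let $\epsilon_0>0$, $\Omega_1,\Omega_2>0$, and $\lambda_k=d_k^\alpha$ with $0<d_1<d_2$, $\alpha>0$. For $\rho_1,\rho_2>0$ let $B=\frac{\epsilon_0}{\rho_2}$, $C=\frac{\epsilon_0}{\rho_1}$, $k=\frac{\epsilon_0\rho_2}{\rho_1}$. Then the problem $$\min_{\rho_1,\rho_2}\ 1-\frac{\lambda_2}{\lambda_2+k\lambda_1}e^{-\lambda_1C-(\lambda_2+k\lambda_1)B}\quad\text{s.t. } 0<\rho_1\le\Omega_1,\ 0<\rho_2\le\Omega_2$$ has optimal solution $$\rho_1=\Omega_1,\qquad \rho_2=\min\left(\Omega_2,\ \frac{\epsilon_0\lambda_1\lambda_2+\lambda_2\sqrt{4\Omega_1\lambda_1+\epsilon_0^2\lambda_1^2}}{2\lambda_1}\right).$$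
   Context: Interpretation: uplink two-user NOMA with target SNR $\epsilon_0$, where $\rho_1,\rho_2$ are the transmit SNRs of the nearer and farther user, constrained by maximum transmit SNRs $\Omega_1,\Omega_2$; the objective is the common outage probability when users are ordered correctly. *)

theory Defs
  imports Complex_Main
begin

definition outage :: "real \<Rightarrow> real \<Rightarrow> real \<Rightarrow> real \<Rightarrow> real \<Rightarrow> real" where
  "outage eps0 lam1 lam2 rho1 rho2 =
     (let B = eps0 / rho2; C = eps0 / rho1; k = eps0 * rho2 / rho1 in
      1 - lam2 / (lam2 + k * lam1) * exp (- lam1 * C - (lam2 + k * lam1) * B))"

definition feasible :: "real \<Rightarrow> real \<Rightarrow> (real \<times> real) set" where
  "feasible Om1 Om2 = {(r1, r2). 0 < r1 \<and> r1 \<le> Om1 \<and> 0 < r2 \<and> r2 \<le> Om2}"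

end

theory Submission
  imports Defs
begin

definition GG :: "real \<Rightarrow> real \<Rightarrow> real \<Rightarrow> real \<Rightarrow> real \<Rightarrow> real" where
  "GG e l1 l2 r1 r2 = ln (l2 * r1) - ln (l2 * r1 + e * l1 * r2) - e * l1 * (1 + e) / r1 - e * l2 / r2"

lemma outage_GG:
  assumes "e > 0" "l1 > 0" "l2 > 0" "r1 > 0" "r2 > 0"
  shows "outage e l1 l2 r1 r2 = 1 - exp (GG e l1 l2 r1 r2)"
proof -
  have p: "l2 * r1 + e * l1 * r2 > 0" using assms by (simp add: add_pos_pos mult_pos_pos)
  have "exp (GG e l1 l2 r1 r2) = exp (ln (l2 * r1)) / exp (ln (l2 * r1 + e * l1 * r2))
        * exp (- e * l1 * (1 + e) / r1 - e * l2 / r2)"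
    unfolding GG_def by (simp add: exp_diff exp_add[symmetric])
  also have "\<dots> = (l2 * r1) / (l2 * r1 + e * l1 * r2) * exp (- e * l1 * (1 + e) / r1 - e * l2 / r2)"
    using assms p by simp
  also have "(l2 * r1) / (l2 * r1 + e * l1 * r2) = l2 / (l2 + e * r2 / r1 * l1)"
    using assms p by (simp add: field_simps)
  also have "- e * l1 * (1 + e) / r1 - e * l2 / r2 = - l1 * (e / r1) - (l2 + e * r2 / r1 * l1) * (e / r2)"
    using assms by (simp add: field_simps)
  finally show ?thesis unfolding outage_def Let_def by simp
qed

lemma GG_mono1:
  assumes "e > 0" "l1 > 0" "l2 > 0" "r1 > 0" "r2 > 0" "r1 \<le> R"
  shows "GG e l1 l2 r1 r2 \<le> GG e l1 l2 R r2"
proof -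
  have R: "R > 0" using assms by linarith
  have c: "e * l1 * r2 > 0" using assms by simp
  have p1: "l2 * r1 + e * l1 * r2 > 0" using assms c by (simp add: add_pos_pos mult_pos_pos)
  have p2: "l2 * R + e * l1 * r2 > 0" using R assms c by (simp add: add_pos_pos mult_pos_pos)
  have "ln (l2 * r1) - ln (l2 * r1 + e * l1 * r2) = ln (l2 * r1 / (l2 * r1 + e * l1 * r2))"
    using assms c p1 by (simp add: ln_div)
  also have "\<dots> \<le> ln (l2 * R / (l2 * R + e * l1 * r2))"
  proof (subst ln_le_cancel_iff)
    show "0 < l2 * r1 / (l2 * r1 + e * l1 * r2)" using assms p1 by simp
    show "0 < l2 * R / (l2 * R + e * l1 * r2)" using assms R p2 by simp
    have "l2 * r1 * (l2 * R + e * l1 * r2) \<le> l2 * R * (l2 * r1 + e * l1 * r2)"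
      using assms c by (simp add: algebra_simps mult_right_mono)
    then show "l2 * r1 / (l2 * r1 + e * l1 * r2) \<le> l2 * R / (l2 * R + e * l1 * r2)"
      using assms R c by (simp add: divide_simps add_pos_pos)
  qed
  also have "\<dots> = ln (l2 * R) - ln (l2 * R + e * l1 * r2)"
    using assms R c p2 by (simp add: ln_div)
  finally have 1: "ln (l2 * r1) - ln (l2 * r1 + e * l1 * r2) \<le> ln (l2 * R) - ln (l2 * R + e * l1 * r2)" .
  have 2: "e * l1 * (1 + e) / R \<le> e * l1 * (1 + e) / r1"
    using assms by (intro divide_left_mono) auto
  show ?thesis unfolding GG_def using 1 2 by linarith
qed

lemma GG_deriv:
  assumes "e > 0" "l1 > 0" "l2 > 0" "R > 0" "t > 0"
  shows "DERIV (GG e l1 l2 R) t :> (- e * l1 / (l2 * R + e * l1 * t) + e * l2 / t^2)"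
proof -
  have p: "l2 * R + e * l1 * t > 0" using assms by (simp add: add_pos_pos mult_pos_pos)
  show ?thesis unfolding GG_def
    using assms p
    apply (auto intro!: derivative_eq_intros)
    apply (simp add: divide_simps power2_eq_square)
    done
qed

lemma deriv_sign:
  fixes e l1 l2 R t :: real
  assumes "e > 0" "l1 > 0" "l2 > 0" "R > 0" "t > 0"
  shows "(- e * l1 / (l2 * R + e * l1 * t) + e * l2 / t^2) =
         e * (l2 * (l2 * R + e * l1 * t) - l1 * t^2) / (t^2 * (l2 * R + e * l1 * t))"
proof -
  have p: "l2 * R + e * l1 * t > 0" using assms by (simp add: add_pos_pos mult_pos_pos)
  show ?thesis using assms p by (simp add: field_simps power2_eq_square)
qed

theorem corollary3:
  fixes eps0 Om1 Om2 d1 d2 \<alpha> lam1 lam2 :: real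
  assumes "eps0 > 0" "Om1 > 0" "Om2 > 0"
    and "0 < d1" "d1 < d2" "\<alpha> > 0"
    and "lam1 = d1 powr \<alpha>" "lam2 = d2 powr \<alpha>"
  shows "is_arg_min (\<lambda>(r1, r2). outage eps0 lam1 lam2 r1 r2)
           (\<lambda>p. p \<in> feasible Om1 Om2)
           (Om1, min Om2 ((eps0 * lam1 * lam2 + lam2 * sqrt (4 * Om1 * lam1 + eps0\<^sup>2 * lam1\<^sup>2))
                           / (2 * lam1)))"
proof -
  have l1: "lam1 > 0" using assms by simp
  have l2: "lam2 > 0" using assms by simp
  define s where "s = sqrt (4 * Om1 * lam1 + eps0\<^sup>2 * lam1\<^sup>2)"
  have s2: "s^2 = 4 * Om1 * lam1 + eps0\<^sup>2 * lam1\<^sup>2"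
    unfolding s_def using assms l1 by (simp add: add_nonneg_nonneg)
  have sge: "s \<ge> eps0 * lam1"
    unfolding s_def using assms l1
    by (intro real_le_rsqrt) (simp add: power_mult_distrib add_nonneg_nonneg)
  have s_pos: "s > 0" using sge assms l1 by (smt (verit) mult_pos_pos)
  define rs where "rs = (eps0 * lam1 * lam2 + lam2 * s) / (2 * lam1)"
  define rm where "rm = lam2 * (eps0 * lam1 - s) / (2 * lam1)"
  have rs_pos: "rs > 0" unfolding rs_def using assms l1 l2 s_pos
    by (intro divide_pos_pos add_pos_pos mult_pos_pos) auto
  have rm_np: "rm \<le> 0" unfolding rm_def using l1 l2 sge
    by (intro divide_nonpos_pos mult_nonneg_nonpos) auto
  have quad: "lam1 * t^2 - eps0 * lam1 * lam2 * t - lam2^2 * Om1 = lam1 * (t - rs) * (t - rm)" for t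
  proof -
    have "lam1 * (t - rs) * (t - rm) = lam1 * t^2 - lam1 * (rs + rm) * t + lam1 * rs * rm"
      by (simp add: algebra_simps power2_eq_square)
    also have "lam1 * (rs + rm) = eps0 * lam1 * lam2" unfolding rs_def rm_def using l1
      by (simp add: field_simps)
    also have "lam1 * rs * rm = lam2^2 * (eps0^2 * lam1^2 - s^2) / (4 * lam1)"
      unfolding rs_def rm_def using l1 by (simp add: field_simps power2_eq_square)
    also have "\<dots> = -(lam2^2 * Om1)" unfolding s2 using l1 by (simp add: field_simps power2_eq_square)
    finally show ?thesis by simp
  qed
  define m where "m = min Om2 rs"
  have m_pos: "m > 0" unfolding m_def using rs_pos assms by simp
  have feas: "(Om1, m) \<in> feasible Om1 Om2" unfolding feasible_def m_def using assms rs_pos by auto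
  have dpos: "- eps0 * lam1 / (lam2 * Om1 + eps0 * lam1 * t) + eps0 * lam2 / t^2 \<ge> 0"
    if "0 < t" "t \<le> rs" for t
  proof -
    have "lam1 * (t - rs) * (t - rm) \<le> 0"
    proof -
      have "lam1 * (t - rs) \<le> 0" using that l1 by (simp add: mult_nonneg_nonpos)
      moreover have "t - rm \<ge> 0" using that rm_np by simp
      ultimately show ?thesis by (simp add: mult_nonpos_nonneg)
    qed
    hence "l2 * 0 \<le> lam2 * (lam2 * Om1 + eps0 * lam1 * t) - lam1 * t^2" for l2 :: real
      using quad[of t] by (simp add: algebra_simps power2_eq_square)
    hence "0 \<le> lam2 * (lam2 * Om1 + eps0 * lam1 * t) - lam1 * t^2" by simp
    moreover have "lam2 * Om1 + eps0 * lam1 * t > 0" using assms l1 l2 that by (simp add: add_pos_pos)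
    ultimately show ?thesis
      unfolding deriv_sign[OF assms(1) l1 l2 assms(2) that(1)]
      using assms that by (simp add: divide_nonneg_pos)
  qed
  have dneg: "- eps0 * lam1 / (lam2 * Om1 + eps0 * lam1 * t) + eps0 * lam2 / t^2 \<le> 0"
    if "rs \<le> t" for t
  proof -
    have t: "t > 0" using that rs_pos by linarith
    have "lam1 * (t - rs) * (t - rm) \<ge> 0"
      using that rm_np l1 t by (intro mult_nonneg_nonneg) auto
    hence "0 \<ge> lam2 * (lam2 * Om1 + eps0 * lam1 * t) - lam1 * t^2"
      using quad[of t] by (simp add: algebra_simps power2_eq_square)
    moreover have "lam2 * Om1 + eps0 * lam1 * t > 0" using assms l1 l2 t by (simp add: add_pos_pos)
    ultimately show ?thesis
      unfolding deriv_sign[OF assms(1) l1 l2 assms(2) t]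
      using assms t by (simp add: divide_nonpos_pos mult_nonneg_nonpos)
  qed
  have step2: "GG eps0 lam1 lam2 Om1 t \<le> GG eps0 lam1 lam2 Om1 m" if "0 < t" "t \<le> Om2" for t
  proof (cases "t \<le> m")
    case True
    show ?thesis
    proof (rule DERIV_nonneg_imp_nondecreasing[OF True])
      fix x assume "t \<le> x" "x \<le> m"
      then have "0 < x" "x \<le> rs" using that unfolding m_def by auto
      then show "\<exists>y. DERIV (GG eps0 lam1 lam2 Om1) x :> y \<and> y \<ge> 0"
        using GG_deriv[OF assms(1) l1 l2 assms(2)] dpos by blast
    qed
  next
    case False
    then have mrs: "m = rs" unfolding m_def using that by auto
    have "GG eps0 lam1 lam2 Om1 t \<le> GG eps0 lam1 lam2 Om1 rs"
    proof (rule DERIV_nonpos_imp_nonincreasing[of rs t "GG eps0 lam1 lam2 Om1"])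
      show "rs \<le> t" using False mrs by simp
      fix x assume "rs \<le> x" "x \<le> t"
      then have "0 < x" using rs_pos by linarith
      then show "\<exists>y. DERIV (GG eps0 lam1 lam2 Om1) x :> y \<and> y \<le> 0"
        using GG_deriv[OF assms(1) l1 l2 assms(2)] dneg \<open>rs \<le> x\<close> by blast
    qed
    then show ?thesis using mrs by simp
  qed
  have "m = min Om2 ((eps0 * lam1 * lam2 + lam2 * sqrt (4 * Om1 * lam1 + eps0\<^sup>2 * lam1\<^sup>2)) / (2 * lam1))"
    unfolding m_def rs_def s_def ..
  moreover have "is_arg_min (\<lambda>(r1, r2). outage eps0 lam1 lam2 r1 r2) (\<lambda>p. p \<in> feasible Om1 Om2) (Om1, m)"
    unfolding is_arg_min_def
  proof (intro conjI notI)
    show "(Om1, m) \<in> feasible Om1 Om2" by (rule feas)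
    assume "\<exists>y. y \<in> feasible Om1 Om2 \<and> (\<lambda>(r1, r2). outage eps0 lam1 lam2 r1 r2) y
              < (\<lambda>(r1, r2). outage eps0 lam1 lam2 r1 r2) (Om1, m)"
    then obtain y1 y2 where y: "0 < y1" "y1 \<le> Om1" "0 < y2" "y2 \<le> Om2"
      and lt: "outage eps0 lam1 lam2 y1 y2 < outage eps0 lam1 lam2 Om1 m"
      unfolding feasible_def by auto
    have "GG eps0 lam1 lam2 y1 y2 \<le> GG eps0 lam1 lam2 Om1 y2"
      using GG_mono1[OF assms(1) l1 l2 y(1,3,2)] .
    also have "\<dots> \<le> GG eps0 lam1 lam2 Om1 m" using step2 y by blast
    finally have "exp (GG eps0 lam1 lam2 y1 y2) \<le> exp (GG eps0 lam1 lam2 Om1 m)" by simp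
    then show False using lt outage_GG[OF assms(1) l1 l2 y(1,3)] outage_GG[OF assms(1) l1 l2 assms(2) m_pos]
      by linarith
  qed
  ultimately show ?thesis by simp
qed

end
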